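(* Let $S$ be a finite semigroup. Then $S$ is DSC if and only if $S$ is a group.
   Context: A diagonal subsemigroup of $S\times S$ is a subsemigroup containing $\{(s,s)\colon s\in S\}$; a congruence is a symmetric and transitive diagonal subsemigroup; $S$ is DSC if every diagonal subsemigroup of $S\times S$ is a congruence on $S$. *)

theory Defs
  imports Main
begin

definition diagonal_subsemigroup :: "('a::semigroup_mult \<times> 'a) set \<Rightarrow> bool" where
  "diagonal_subsemigroup R \<longleftrightarrow>
     (\<forall>s. (s, s) \<in> R) \<and>
     (\<forall>a b c d. (a, b) \<in> R \<longrightarrow> (c, d) \<in> R \<longrightarrow> (a * c, b * d) \<in> R)"

definition is_congruence :: "('a::semigroup_mult \<times> 'a) set \<Rightarrow> bool" where
  "is_congruence R \<longleftrightarrow> diagonal_subsemigroup R \<and> sym R \<and> trans R"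

definition DSC :: "'a::semigroup_mult itself \<Rightarrow> bool" where
  "DSC _ \<longleftrightarrow> (\<forall>R :: ('a \<times> 'a) set. diagonal_subsemigroup R \<longrightarrow> is_congruence R)"

definition is_group :: "'a::semigroup_mult itself \<Rightarrow> bool" where
  "is_group _ \<longleftrightarrow> (\<exists>e::'a. (\<forall>x. e * x = x \<and> x * e = x) \<and> (\<forall>x. \<exists>y. x * y = e \<and> y * x = e))"

end

theory Submission
  imports Defs
begin

datatype 'a mon = One | El 'a

instantiation mon :: (semigroup_mult) monoid_mult
begin
definition one_mon :: "'a mon" where "one_mon = One"
fun times_mon :: "'a mon \<Rightarrow> 'a mon \<Rightarrow> 'a mon" where
  "times_mon One y = y"
| "times_mon (El x) One = El x"
| "times_mon (El x) (El y) = El (x*y)"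
instance proof
  fix a b c :: "'a mon"
  show "a*b*c = a*(b*c)" by (cases a; cases b; cases c) (simp_all add: mult.assoc)
  show "1*a = a" by (simp add: one_mon_def)
  show "a*1 = a" by (cases a) (simp_all add: one_mon_def)
qed
end

instance mon :: (finite) finite
proof
  have "(UNIV::'a mon set) = insert One (range El)"
  proof (intro set_eqI iffI)
    fix x :: "'a mon" show "x \<in> insert One (range El)" by (cases x) auto
  qed auto
  thus "finite (UNIV::'a mon set)" by (metis finite_UNIV finite_imageI finite_insert)
qed

lemma El_mult: "El (x*y) = El x * El y" by simp
lemma El_left: "\<exists>z. El x * r = El z" by (cases r) auto
lemma El_right: "\<exists>z. r * El x = El z" by (cases r) auto
lemma El_mid: "\<exists>z. u * El x * r = El z"
  by (metis El_left El_right)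

lemma idem_pow:
  fixes p :: "'b::{monoid_mult,finite}"
  shows "\<exists>N\<ge>1. p^N * p^N = p^N"
proof -
  let ?A = "{1..card (UNIV::'b set)+1}"
  have "card ((\<lambda>n. p^n) ` ?A) \<le> card (UNIV::'b set)" by (rule card_mono) auto
  hence "\<not> inj_on (\<lambda>n. p^n) ?A" using card_image by fastforce
  then obtain i j where ij: "i \<in> ?A" "j \<in> ?A" "i \<noteq> j" "p^i = p^j"
    unfolding inj_on_def by blast
  then obtain i j where ij: "1 \<le> i" "i < j" "p^i = p^j"
    by (metis atLeastAtMost_iff linorder_neqE_nat)
  define k where "k = j - i"
  have k: "k \<ge> 1" "j = i + k" using ij k_def by auto
  have step: "p^(i+m) = p^(i+m+k)" for m
    using ij(3) k(2) by (metis add.assoc add.commute power_add)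
  have rep: "p^(i+m) = p^(i+m+c*k)" for m c
  proof (induction c)
    case 0 then show ?case by simp
  next
    case (Suc c)
    have "p^(i+m+Suc c*k) = p^(i+(m+c*k)+k)" by (simp add: algebra_simps)
    also have "\<dots> = p^(i+(m+c*k))" using step by simp
    finally show ?case using Suc by (simp add: add.assoc)
  qed
  define N where "N = i*k"
  have "N \<ge> i" using k by (simp add: N_def)
  have "p^N * p^N = p^(i + (N-i) + i*k)" using \<open>N \<ge> i\<close> by (simp add: power_add[symmetric] N_def)
  also have "\<dots> = p^(i+(N-i))" using rep[of "N-i" i] by simp
  also have "\<dots> = p^N" using \<open>N \<ge> i\<close> by simp
  finally show ?thesis using \<open>N \<ge> i\<close> ij(1) by (intro exI[of _ N]) auto
qed

lemma stab_right:
  fixes x y :: "'b::{monoid_mult,finite}"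
  assumes "x = y*s" "y = p*x*q"
  shows "\<exists>t. y = x*t"
proof -
  define r where "r = s*q"
  have "y = p*(y*s)*q" using assms by simp
  hence y: "y = p*y*r" by (simp add: r_def mult.assoc)
  have pw: "y = p^n*y*r^n" for n
  proof (induction n)
    case 0 then show ?case by simp
  next
    case (Suc n)
    have "p^Suc n*y*r^Suc n = p^n*(p*y*r)*r^n"
      by (simp only: power_Suc2[of p] power_Suc[of r] mult.assoc)
    then show ?case using y Suc by simp
  qed
  obtain N where N: "N \<ge> 1" "p^N*p^N = p^N" using idem_pow by blast
  have "p^N*y = p^N*(p^N*y*r^N)" using pw by metis
  also have "\<dots> = p^N*y*r^N" using N by (simp add: mult.assoc[symmetric])
  also have "\<dots> = y" using pw by metis
  finally have py: "p^N*y = y" .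
  have "y = y*r^N" using pw[of N] py by simp
  also have "r^N = s*q*r^(N-1)" using N by (metis r_def power_eq_if not_one_le_zero)
  finally have "y = x*(q*r^(N-1))" using assms(1) by (simp add: mult.assoc)
  thus ?thesis by blast
qed

lemma stab_left:
  fixes x y :: "'b::{monoid_mult,finite}"
  assumes "x = s*y" "y = p*x*q"
  shows "\<exists>t. y = t*x"
proof -
  define r where "r = p*s"
  have "y = p*(s*y)*q" using assms by simp
  hence y: "y = r*y*q" by (simp add: r_def mult.assoc)
  have pw: "y = r^n*y*q^n" for n
  proof (induction n)
    case 0 then show ?case by simp
  next
    case (Suc n)
    have "r^Suc n*y*q^Suc n = r^n*(r*y*q)*q^n"
      by (simp only: power_Suc2[of r] power_Suc[of q] mult.assoc)
    then show ?case using y Suc by simp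
  qed
  obtain N where N: "N \<ge> 1" "q^N*q^N = q^N" using idem_pow by blast
  have "y*q^N = (r^N*y*q^N)*q^N" using pw by metis
  also have "\<dots> = r^N*y*q^N" using N by (simp add: mult.assoc)
  also have "\<dots> = y" using pw by metis
  finally have yq: "y*q^N = y" .
  have "y = r^N*y" using pw[of N] yq by (simp add: mult.assoc)
  also have "r^N = r^(N-1)*p*s" using N
    by (metis r_def power_Suc2 Suc_diff_1 less_le_trans zero_less_one mult.assoc)
  finally have "y = (r^(N-1)*p)*x" using assms(1) by (simp add: mult.assoc)
  thus ?thesis by blast
qed

lemma solv_group:
  fixes S :: "'a::semigroup_mult itself"
  assumes R: "\<And>a b::'a. \<exists>t. b = a*t" and L: "\<And>a b::'a. \<exists>t. b = t*a"
  shows "is_group S"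
proof -
  obtain a :: 'a where True by blast
  obtain e where ae: "a*e = a" using R by metis
  obtain f where fa: "f*a = a" using L by metis
  have re: "b*e = b" for b
  proof -
    obtain y where "b = y*a" using L by blast
    thus ?thesis using ae by (simp add: mult.assoc)
  qed
  have lf: "f*b = b" for b
  proof -
    obtain y where "b = a*y" using R by blast
    thus ?thesis using fa by (simp add: mult.assoc[symmetric])
  qed
  have ef: "e = f" using re[of f] lf[of e] by simp
  have inv: "\<exists>y. x*y = e \<and> y*x = e" for x
  proof -
    obtain c where c: "e = x*c" using R by blast
    obtain d where d: "e = d*x" using L by blast
    have "d = d*(x*c)" using c re by simp
    also have "\<dots> = c" using d lf ef by (simp add: mult.assoc[symmetric])
    finally show ?thesis using c d by metis
  qed
  show ?thesis unfolding is_group_def using re lf ef inv by metis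
qed

lemma simple_from_dsc:
  fixes a b :: "'a::semigroup_mult"
  assumes dsc: "\<And>R::('a\<times>'a) set. diagonal_subsemigroup R \<Longrightarrow> sym R"
  shows "\<exists>u v. El b = u * El a * v"
proof -
  define R where "R = {(x::'a,y). x = y \<or> (\<exists>u v. El x = u * El a * v)}"
  have "diagonal_subsemigroup R"
    unfolding diagonal_subsemigroup_def
  proof (intro conjI allI impI)
    fix s show "(s,s) \<in> R" by (simp add: R_def)
  next
    fix x y c d assume xy: "(x,y) \<in> R" and cd: "(c,d) \<in> R"
    show "(x*c, y*d) \<in> R"
    proof (cases "x = y")
      case True
      show ?thesis
      proof (cases "c = d")
        case True then show ?thesis using \<open>x = y\<close> by (simp add: R_def)
      next
        case False
        then obtain u v where "El c = u * El a * v" using cd by (auto simp: R_def)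
        hence "El (x*c) = (El x * u) * El a * v" by (simp only: El_mult mult.assoc)
        thus ?thesis unfolding R_def by blast
      qed
    next
      case False
      then obtain u v where "El x = u * El a * v" using xy by (auto simp: R_def)
      hence "El (x*c) = u * El a * (v * El c)" by (simp only: El_mult mult.assoc)
      thus ?thesis unfolding R_def by blast
    qed
  qed
  hence "sym R" by (rule dsc)
  have "El a = 1 * El a * 1" by simp
  hence "(a,b) \<in> R" unfolding R_def by blast
  hence "(b,a) \<in> R" using \<open>sym R\<close> by (meson symD)
  thus ?thesis unfolding R_def using \<open>El a = 1 * El a * 1\<close> by blast
qed

lemma right_solv:
  fixes a b :: "'a::{semigroup_mult,finite}"
  assumes dsc: "\<And>R::('a\<times>'a) set. diagonal_subsemigroup R \<Longrightarrow> sym R"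
  shows "\<exists>t. b = a*t"
proof -
  define A where "A = {El (a*t) | t. True}"
  define Q where "Q = {(x::'a,y). \<forall>u v. u * El y * v \<in> A \<longrightarrow> u * El x * v \<in> A}"
  have "diagonal_subsemigroup Q"
    unfolding diagonal_subsemigroup_def
  proof (intro conjI allI impI)
    fix s show "(s,s) \<in> Q" by (simp add: Q_def)
  next
    fix x y c d assume xy: "(x,y) \<in> Q" and cd: "(c,d) \<in> Q"
    show "(x*c, y*d) \<in> Q" unfolding Q_def
    proof (clarify)
      fix u v assume h: "u * El (y*d) * v \<in> A"
      hence "(u * El y) * El d * v \<in> A" by (simp only: El_mult mult.assoc)
      hence "(u * El y) * El c * v \<in> A" using cd unfolding Q_def by blast
      hence "u * El y * (El c * v) \<in> A" by (simp only: mult.assoc)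
      hence "u * El x * (El c * v) \<in> A" using xy unfolding Q_def by blast
      thus "u * El (x*c) * v \<in> A" by (simp only: El_mult mult.assoc)
    qed
  qed
  hence "sym Q" by (rule dsc)
  have "(a*b, b) \<in> Q" unfolding Q_def
  proof (clarify)
    fix u v assume h: "u * El b * v \<in> A"
    show "u * El (a*b) * v \<in> A"
    proof (cases u)
      case One
      obtain z where "El (a*b) * v = El z" using El_left by blast
      have "u * El (a*b) * v = El a * (El b * v)" using One by (simp only: one_mon_def[symmetric] El_mult mult.assoc mult_1_left mult_1_right)
      moreover obtain z where "El b * v = El z" using El_left by blast
      ultimately show ?thesis by (auto simp: A_def)
    next
      case (El u')
      obtain t where t: "El u' * El b * v = El (a*t)" using h El by (auto simp: A_def)
      obtain p q where pq: "El u' = p * El (a*t) * q" using simple_from_dsc[OF dsc] by blast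
      have "El (a*t) = El u' * (El b * v)" using t by (metis mult.assoc)
      from stab_right[OF this pq] obtain r where r: "El u' = El (a*t) * r" by blast
      obtain z where z: "El t * r * El (a*b) * v = El z"
        by (metis El_left El_right mult.assoc)
      have "u * El (a*b) * v = El a * (El t * r * El (a*b) * v)"
        using El r by (simp only: El_mult mult.assoc)
      also have "\<dots> = El (a*z)" using z by simp
      finally show ?thesis by (auto simp: A_def)
    qed
  qed
  hence "(b, a*b) \<in> Q" using \<open>sym Q\<close> by (meson symD)
  hence "1 * El (a*b) * 1 \<in> A \<longrightarrow> 1 * El b * 1 \<in> A" unfolding Q_def by blast
  moreover have "1 * El (a*b) * 1 \<in> A" by (auto simp: A_def)
  ultimately have "1 * El b * 1 \<in> A" by blast
  thus ?thesis by (auto simp: A_def)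
qed

lemma left_solv:
  fixes a b :: "'a::{semigroup_mult,finite}"
  assumes dsc: "\<And>R::('a\<times>'a) set. diagonal_subsemigroup R \<Longrightarrow> sym R"
  shows "\<exists>t. b = t*a"
proof -
  define A where "A = {El (t*a) | t. True}"
  define Q where "Q = {(x::'a,y). \<forall>u v. u * El y * v \<in> A \<longrightarrow> u * El x * v \<in> A}"
  have "diagonal_subsemigroup Q"
    unfolding diagonal_subsemigroup_def
  proof (intro conjI allI impI)
    fix s show "(s,s) \<in> Q" by (simp add: Q_def)
  next
    fix x y c d assume xy: "(x,y) \<in> Q" and cd: "(c,d) \<in> Q"
    show "(x*c, y*d) \<in> Q" unfolding Q_def
    proof (clarify)
      fix u v assume h: "u * El (y*d) * v \<in> A"
      hence "(u * El y) * El d * v \<in> A" by (simp only: El_mult mult.assoc)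
      hence "(u * El y) * El c * v \<in> A" using cd unfolding Q_def by blast
      hence "u * El y * (El c * v) \<in> A" by (simp only: mult.assoc)
      hence "u * El x * (El c * v) \<in> A" using xy unfolding Q_def by blast
      thus "u * El (x*c) * v \<in> A" by (simp only: El_mult mult.assoc)
    qed
  qed
  hence "sym Q" by (rule dsc)
  have "(b*a, b) \<in> Q" unfolding Q_def
  proof (clarify)
    fix u v assume h: "u * El b * v \<in> A"
    show "u * El (b*a) * v \<in> A"
    proof (cases v)
      case One
      have "u * El (b*a) * v = (u * El b) * El a" using One by (simp only: one_mon_def[symmetric] El_mult mult.assoc mult_1_left mult_1_right)
      moreover obtain z where "u * El b = El z" using El_right by blast
      ultimately show ?thesis by (auto simp: A_def)
    next
      case (El v')
      obtain t where t: "u * El b * El v' = El (t*a)" using h El by (auto simp: A_def)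
      obtain p q where pq: "El v' = p * El (t*a) * q" using simple_from_dsc[OF dsc] by blast
      have "El (t*a) = (u * El b) * El v'" using t by (metis mult.assoc)
      from stab_left[OF this pq] obtain r where r: "El v' = r * El (t*a)" by blast
      obtain z where z: "u * El (b*a) * r * El t = El z"
        by (metis El_left El_right mult.assoc)
      have "u * El (b*a) * v = (u * El (b*a) * r * El t) * El a"
        using El r by (simp add: mult.assoc)
      also have "\<dots> = El (z*a)" using z by simp
      finally show ?thesis by (auto simp: A_def)
    qed
  qed
  hence "(b, b*a) \<in> Q" using \<open>sym Q\<close> by (meson symD)
  hence "1 * El (b*a) * 1 \<in> A \<longrightarrow> 1 * El b * 1 \<in> A" unfolding Q_def by blast
  moreover have "1 * El (b*a) * 1 \<in> A" by (auto simp: A_def)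
  ultimately have "1 * El b * 1 \<in> A" by blast
  thus ?thesis by (auto simp: A_def)
qed

theorem mainTheorem7:
  fixes S :: "'a::{semigroup_mult, finite} itself"
  shows "DSC S \<longleftrightarrow> is_group S"
proof
  assume "DSC S"
  hence dsc: "\<And>R::('a\<times>'a) set. diagonal_subsemigroup R \<Longrightarrow> sym R"
    by (auto simp: DSC_def is_congruence_def)
  show "is_group S" by (rule solv_group) (use right_solv[OF dsc] left_solv[OF dsc] in blast)+
next
  assume "is_group S"
  then obtain e :: 'a where e: "\<And>x. e*x = x" "\<And>x. x*e = x"
    and inv: "\<And>x. \<exists>y. x*y = e \<and> y*x = e" unfolding is_group_def by blast
  have cancel: "a*c = a*d \<Longrightarrow> c = d" for a c d :: 'a
  proof -
    assume h: "a*c = a*d"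
    obtain y where y: "y*a = e" using inv by blast
    have "y*(a*c) = y*(a*d)" using h by simp
    thus "c = d" using y e by (simp add: mult.assoc[symmetric])
  qed
  show "DSC S" unfolding DSC_def is_congruence_def
  proof (intro allI impI conjI)
    fix R :: "('a\<times>'a) set" assume R: "diagonal_subsemigroup R"
    thus "diagonal_subsemigroup R" .
    have diag: "(s,s) \<in> R" for s using R by (simp add: diagonal_subsemigroup_def)
    have mul: "(x,y) \<in> R \<Longrightarrow> (c,d) \<in> R \<Longrightarrow> (x*c, y*d) \<in> R" for x y c d
      using R by (simp add: diagonal_subsemigroup_def)
    have invR: "\<exists>c d. (c,d) \<in> R \<and> c*a = e \<and> d*b = e \<and> a*c = e \<and> b*d = e" if ab: "(a,b) \<in> R" for a b
    proof -
      define f where "f = (\<lambda>(c::'a,d::'a). (a*c, b*d))"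
      have "f ` R \<subseteq> R" using mul ab by (auto simp: f_def)
      moreover have "inj_on f R" by (auto simp: inj_on_def f_def dest: cancel)
      ultimately have "f ` R = R" by (intro endo_inj_surj) auto
      then obtain c d where cd: "(c,d) \<in> R" "f (c,d) = (e,e)" using diag[of e] by force
      hence ac: "a*c = e" "b*d = e" by (auto simp: f_def)
      have "c*a = e" if h: "a*c = e" for a c :: 'a
      proof -
        obtain y where y: "y*a = e" using inv by blast
        have "y = y*(a*c)" using h e by simp
        also have "\<dots> = c" using y e by (simp add: mult.assoc[symmetric])
        finally show ?thesis using y by simp
      qed
      thus ?thesis using cd ac by blast
    qed
    show "sym R"
    proof (rule symI)
      fix a b assume ab: "(a,b) \<in> R"
      obtain c d where cd: "(c,d) \<in> R" "c*a = e" "d*b = e" "a*c = e" "b*d = e" using invR[OF ab] by blast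
      have "(b*c*a, b*d*a) \<in> R" using mul[OF mul[OF diag cd(1)] diag] .
      moreover have "b*c*a = b" "b*d*a = a" using cd e by (simp_all add: mult.assoc)
      ultimately show "(b,a) \<in> R" by simp
    qed
    show "trans R"
    proof (rule transI)
      fix a b c assume ab: "(a,b) \<in> R" and bc: "(b,c) \<in> R"
      obtain b' where b': "b*b' = e" "b'*b = e" using inv by blast
      have "(a*b'*b, b*b'*c) \<in> R" using mul[OF mul[OF ab diag] bc] .
      thus "(a,c) \<in> R" using b' e by (simp add: mult.assoc)
    qed
  qed
qed

end
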